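(* Let $u,u'\in R^{\times}$ and $a,a'\in R$. If $1-q\in R^{\times}$ and $\mathrm{Id}_{H_N^q}(\mathcal{B}_{(u,a)})=\mathrm{Id}_{H_N^q}(\mathcal{B}_{(u',a')})$, then $a'=a$.
   Context: $R$ is a commutative unital ring, $N\ge2$, and $q\in R$ a root of the $N$-th cyclotomic polynomial over $\mathbb{Z}$. $H_N^q$ is the Taft Hopf algebra over $R$: generated by $g,x$ with $g^N=1$, $x^N=0$, $xg=qgx$, $\Delta(g)=g\otimes g$, $\Delta(x)=1\otimes x+x\otimes g$, $\varepsilon(g)=1$, $\varepsilon(x)=0$, free over $R$ with basis $\{g^mx^n:0\le m,n<N\}$. For $u\in R^{\times},a\in R$, $\mathcal{B}_{(u,a)}$ is the $R$-algebra generated by $v_g,v_x$ with $v_g^N=u$, $v_x^N=a$, $v_xv_g=qv_gv_x$, a right $H_N^q$-comodule algebra via $v_g\mapsto v_g\otimes g$, $v_x\mapsto1\otimes x+v_x\otimes g$. Let $Z_i^H$ ($i\ge1$) be copies $\{Z_i^h:h\in H_N^q\}$ of the $R$-module $H_N^q$ and $T=T(\bigoplus_iZ_i^H)$ the tensor algebra with coaction $\delta(Z_i^h)=\sum Z_i^{h_1}\otimes h_2$. $P\in T$ is a polynomial $H_N^q$-identity for a right $H_N^q$-comodule algebra $B$ if $f(P)=0$ for all right $H_N^q$-comodule algebra maps $f:T\to B$; $\mathrm{Id}_{H_N^q}(B)$ is the set of these. *)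

theory Defs
  imports "HOL-Computational_Algebra.Polynomial"
begin

text \<open>Standard recursive definition: X^n - 1 is the product of the cyclotomic
  polynomials of the divisors of n (n > 0).\<close>

fun cyclotomic :: "nat \<Rightarrow> int poly" where
  "cyclotomic n =
     (if n = 0 then 1
      else (monom 1 n - 1) div (\<Prod>d\<in>{d. d dvd n \<and> d < n}. cyclotomic d))"

declare cyclotomic.simps [simp del]

definition is_cyclotomic_root :: "nat \<Rightarrow> 'a::comm_ring_1 \<Rightarrow> bool" where
  "is_cyclotomic_root N q \<longleftrightarrow> poly (map_poly of_int (cyclotomic N)) q = 0"

text \<open>An element of a free R-module with basis indexed by a finite set I is a
  coefficient function I -> R (required to vanish outside I).  An algebra
  structure is given by structure constants mu i j k = coefficient of b_k in b_i b_j.\<close>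

definition supp_in :: "'i set \<Rightarrow> ('i \<Rightarrow> 'a::zero) \<Rightarrow> bool" where
  "supp_in I v \<longleftrightarrow> (\<forall>k. k \<notin> I \<longrightarrow> v k = 0)"

definition bvec :: "'i \<Rightarrow> 'i \<Rightarrow> 'a::zero_neq_one" where
  "bvec i = (\<lambda>k. if k = i then 1 else 0)"

definition amul :: "'i set \<Rightarrow> ('i \<Rightarrow> 'i \<Rightarrow> 'i \<Rightarrow> 'a::comm_ring_1)
                    \<Rightarrow> ('i \<Rightarrow> 'a) \<Rightarrow> ('i \<Rightarrow> 'a) \<Rightarrow> ('i \<Rightarrow> 'a)" where
  "amul I mu v w = (\<lambda>k. \<Sum>i\<in>I. \<Sum>j\<in>I. v i * w j * mu i j k)"

primrec apow :: "'i set \<Rightarrow> ('i \<Rightarrow> 'i \<Rightarrow> 'i \<Rightarrow> 'a::comm_ring_1) \<Rightarrow> 'i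
                 \<Rightarrow> ('i \<Rightarrow> 'a) \<Rightarrow> nat \<Rightarrow> ('i \<Rightarrow> 'a)" where
  "apow I mu e v 0 = bvec e"
| "apow I mu e v (Suc n) = amul I mu (apow I mu e v n) v"

definition tmu :: "('i \<Rightarrow> 'i \<Rightarrow> 'i \<Rightarrow> 'a::comm_ring_1) \<Rightarrow> ('j \<Rightarrow> 'j \<Rightarrow> 'j \<Rightarrow> 'a)
                  \<Rightarrow> ('i \<times> 'j) \<Rightarrow> ('i \<times> 'j) \<Rightarrow> ('i \<times> 'j) \<Rightarrow> 'a" where
  "tmu mu1 mu2 = (\<lambda>(i, j) (i', j') (k, l). mu1 i i' k * mu2 j j' l)"

definition tens :: "('i \<Rightarrow> 'a::comm_ring_1) \<Rightarrow> ('j \<Rightarrow> 'a) \<Rightarrow> ('i \<times> 'j \<Rightarrow> 'a)" where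
  "tens v w = (\<lambda>(k, l). v k * w l)"

text \<open>Basis index set {g^m x^n : 0 <= m,n < N} (resp. {v_g^m v_x^n}).\<close>

definition BI :: "nat \<Rightarrow> (nat \<times> nat) set" where
  "BI N = {..<N} \<times> {..<N}"

text \<open>Structure constants of the algebra generated by G, X with G^N = u, X^N = a,
  X G = q G X, in the basis G^m X^n (0 <= m,n < N):
  (G^m X^n)(G^k X^l) = q^(n k) G^(m+k) X^(n+l), then reduce G^(m+k) and X^(n+l)
  using G^N = u and X^N = a.\<close>

definition gmu :: "nat \<Rightarrow> 'a::comm_ring_1 \<Rightarrow> 'a \<Rightarrow> 'a
                   \<Rightarrow> nat \<times> nat \<Rightarrow> nat \<times> nat \<Rightarrow> nat \<times> nat \<Rightarrow> 'a" where
  "gmu N q u a = (\<lambda>(m, n) (k, l) (m', n').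
      if m' = (m + k) mod N \<and> n' = (n + l) mod N
      then q ^ (n * k) * (if m + k < N then 1 else u) * (if n + l < N then 1 else a)
      else 0)"

text \<open>Taft algebra: g^N = 1, x^N = 0, x g = q g x.\<close>

definition taft_mu :: "nat \<Rightarrow> 'a::comm_ring_1 \<Rightarrow> nat \<times> nat \<Rightarrow> nat \<times> nat \<Rightarrow> nat \<times> nat \<Rightarrow> 'a" where
  "taft_mu N q = gmu N q 1 0"

definition B_mu :: "nat \<Rightarrow> 'a::comm_ring_1 \<Rightarrow> 'a \<Rightarrow> 'a \<Rightarrow> nat \<times> nat \<Rightarrow> nat \<times> nat \<Rightarrow> nat \<times> nat \<Rightarrow> 'a" where
  "B_mu N q u a = gmu N q u a"

abbreviation one_idx :: "nat \<times> nat" where "one_idx \<equiv> (0, 0)"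
abbreviation g_idx :: "nat \<times> nat" where "g_idx \<equiv> (1, 0)"
abbreviation x_idx :: "nat \<times> nat" where "x_idx \<equiv> (0, 1)"

text \<open>Comultiplication of H: the algebra map H -> H (x) H with
  Delta(g) = g (x) g and Delta(x) = 1 (x) x + x (x) g, so
  Delta(g^m x^n) = Delta(g)^m Delta(x)^n computed in H (x) H.\<close>

definition taft_Delta :: "nat \<Rightarrow> 'a::comm_ring_1 \<Rightarrow> nat \<times> nat \<Rightarrow> ((nat \<times> nat) \<times> (nat \<times> nat) \<Rightarrow> 'a)" where
  "taft_Delta N q = (\<lambda>(m, n).
     (let I2 = BI N \<times> BI N; mu2 = tmu (taft_mu N q) (taft_mu N q); e2 = (one_idx, one_idx);
          Dg = tens (bvec g_idx) (bvec g_idx);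
          Dx = (\<lambda>t. tens (bvec one_idx) (bvec x_idx) t + tens (bvec x_idx) (bvec g_idx) t)
      in amul I2 mu2 (apow I2 mu2 e2 Dg m) (apow I2 mu2 e2 Dx n)))"

text \<open>Coaction of B_(u,a): the algebra map B -> B (x) H with
  v_g |-> v_g (x) g and v_x |-> 1 (x) x + v_x (x) g, so
  rho(v_g^m v_x^n) = rho(v_g)^m rho(v_x)^n computed in B (x) H.\<close>

definition B_rho :: "nat \<Rightarrow> 'a::comm_ring_1 \<Rightarrow> 'a \<Rightarrow> 'a \<Rightarrow> nat \<times> nat \<Rightarrow> ((nat \<times> nat) \<times> (nat \<times> nat) \<Rightarrow> 'a)" where
  "B_rho N q u a = (\<lambda>(m, n).
     (let I2 = BI N \<times> BI N; mu2 = tmu (B_mu N q u a) (taft_mu N q); e2 = (one_idx, one_idx);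
          Rg = tens (bvec g_idx) (bvec g_idx);
          Rx = (\<lambda>t. tens (bvec one_idx) (bvec x_idx) t + tens (bvec x_idx) (bvec g_idx) t)
      in amul I2 mu2 (apow I2 mu2 e2 Rg m) (apow I2 mu2 e2 Rx n)))"

definition lin_ext :: "'i set \<Rightarrow> ('i \<Rightarrow> ('k \<Rightarrow> 'a::comm_ring_1)) \<Rightarrow> ('i \<Rightarrow> 'a) \<Rightarrow> ('k \<Rightarrow> 'a)" where
  "lin_ext I f v = (\<lambda>k. \<Sum>i\<in>I. v i * f i k)"

text \<open>An R-linear map phi : H -> B_(u,a), given by its values phi(g^m x^n), is a
  morphism of right H-comodules iff rho_B(phi(h)) = (phi (x) id)(Delta h)
  for all basis vectors h.\<close>

definition B_comodule_map :: "nat \<Rightarrow> 'a::comm_ring_1 \<Rightarrow> 'a \<Rightarrow> 'a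
                              \<Rightarrow> (nat \<times> nat \<Rightarrow> (nat \<times> nat \<Rightarrow> 'a)) \<Rightarrow> bool" where
  "B_comodule_map N q u a phi \<longleftrightarrow>
     (\<forall>i\<in>BI N. supp_in (BI N) (phi i)) \<and>
     (\<forall>i\<in>BI N.
        lin_ext (BI N) (B_rho N q u a) (phi i)
        = lin_ext (BI N \<times> BI N) (\<lambda>(j, l). tens (phi j) (bvec l)) (taft_Delta N q i))"

text \<open>T = T(\<Oplus>_i Z_i^H) is the free (noncommutative) R-algebra on the symbols
  Z_i^(g^m x^n) (i a natural number, 0 <= m,n < N), since each Z_i^H is free with
  that basis.  An element is a finitely supported coefficient function on words.\<close>

type_synonym letter = "nat \<times> (nat \<times> nat)"

definition T_elem :: "nat \<Rightarrow> (letter list \<Rightarrow> 'a::zero) \<Rightarrow> bool" where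
  "T_elem N P \<longleftrightarrow> finite {w. P w \<noteq> 0} \<and>
     (\<forall>w. P w \<noteq> 0 \<longrightarrow> (\<forall>c\<in>set w. snd c \<in> BI N))"

text \<open>A comodule algebra map f : T -> B is the same as a family (phi_i) of
  comodule maps phi_i : H -> B (f(Z_i^h) = phi_i(h)), extended multiplicatively.\<close>

definition B_eval_word :: "nat \<Rightarrow> 'a::comm_ring_1 \<Rightarrow> 'a \<Rightarrow> 'a
      \<Rightarrow> (nat \<Rightarrow> nat \<times> nat \<Rightarrow> (nat \<times> nat \<Rightarrow> 'a)) \<Rightarrow> letter list \<Rightarrow> (nat \<times> nat \<Rightarrow> 'a)" where
  "B_eval_word N q u a phi w =
     foldl (\<lambda>acc c. amul (BI N) (B_mu N q u a) acc (phi (fst c) (snd c))) (bvec one_idx) w"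

definition B_eval :: "nat \<Rightarrow> 'a::comm_ring_1 \<Rightarrow> 'a \<Rightarrow> 'a
      \<Rightarrow> (nat \<Rightarrow> nat \<times> nat \<Rightarrow> (nat \<times> nat \<Rightarrow> 'a)) \<Rightarrow> (letter list \<Rightarrow> 'a) \<Rightarrow> (nat \<times> nat \<Rightarrow> 'a)" where
  "B_eval N q u a phi P =
     (\<lambda>k. \<Sum>w\<in>{w. P w \<noteq> 0}. P w * B_eval_word N q u a phi w k)"

definition Id_B :: "nat \<Rightarrow> 'a::comm_ring_1 \<Rightarrow> 'a \<Rightarrow> 'a \<Rightarrow> (letter list \<Rightarrow> 'a) set" where
  "Id_B N q u a = {P. T_elem N P \<and>
      (\<forall>phi. (\<forall>i. B_comodule_map N q u a (phi i)) \<longrightarrow> B_eval N q u a phi P = (\<lambda>_. 0))}"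

end

theory Submission
  imports Defs "HOL-Computational_Algebra.Polynomial_Factorial" "HOL-Computational_Algebra.Fundamental_Theorem_Algebra"
begin


lemma mpi_add: "map_poly (of_int :: int \<Rightarrow> 'b::comm_ring_1) (p + q) = map_poly of_int p + map_poly of_int q"
  by (rule poly_eqI) (simp add: coeff_map_poly)

lemma mpi_diff: "map_poly (of_int :: int \<Rightarrow> 'b::comm_ring_1) (p - q) = map_poly of_int p - map_poly of_int q"
  by (rule poly_eqI) (simp add: coeff_map_poly)

lemma mpi_mult: "map_poly (of_int :: int \<Rightarrow> 'b::comm_ring_1) (p * q) = map_poly of_int p * map_poly of_int q"
  by (rule poly_eqI) (simp add: coeff_map_poly coeff_mult)

lemma mpi_1: "map_poly (of_int :: int \<Rightarrow> 'b::comm_ring_1) 1 = 1"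
  by simp

lemma mpi_prod: "map_poly (of_int :: int \<Rightarrow> 'b::comm_ring_1) (\<Prod>i\<in>A. f i) = (\<Prod>i\<in>A. map_poly of_int (f i))"
  by (induction A rule: infinite_finite_induct) (simp_all add: mpi_mult)

lemma mpi_monom: "map_poly (of_int :: int \<Rightarrow> 'b::comm_ring_1) (monom c n) = monom (of_int c) n"
  by (simp add: map_poly_monom)

lemma mpi_pderiv: "map_poly (of_int :: int \<Rightarrow> 'b::idom) (pderiv p) = pderiv (map_poly of_int p)"
  by (rule poly_eqI) (simp add: coeff_map_poly coeff_pderiv)

lemma poly_Xn1: "poly (map_poly (of_int :: int \<Rightarrow> 'b::comm_ring_1) (monom 1 n - 1)) x = x ^ n - 1"
  by (simp add: mpi_diff mpi_monom poly_monom)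

definition Dv :: "nat \<Rightarrow> nat set" where "Dv n = {d. d dvd n}"
definition PD :: "nat \<Rightarrow> nat set" where "PD n = {d. d dvd n \<and> d < n}"

lemma finite_Dv: "n > 0 \<Longrightarrow> finite (Dv n)"
  unfolding Dv_def by (rule finite_subset[of _ "{..n}"]) (auto dest: dvd_imp_le)

lemma finite_PD: "finite (PD n)"
  unfolding PD_def by (rule finite_subset[of _ "{..<n}"]) auto

lemma Dv_PD: "n > 0 \<Longrightarrow> Dv n = insert n (PD n)"
  unfolding Dv_def PD_def using dvd_imp_le by fastforce

lemma n_notin_PD: "n \<notin> PD n" unfolding PD_def by auto

lemma cyc_simp: "n > 0 \<Longrightarrow> cyclotomic n = (monom 1 n - 1) div (\<Prod>d\<in>PD n. cyclotomic d)"
  by (subst cyclotomic.simps) (simp add: PD_def)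

definition FF :: "nat \<Rightarrow> bool" where
  "FF m \<longleftrightarrow> (monom 1 m - 1 :: int poly) = (\<Prod>d\<in>Dv m. cyclotomic d)"

lemma Xdvd: "d dvd n \<Longrightarrow> (monom 1 d - 1 :: 'b::comm_ring_1 poly) dvd monom 1 n - 1"
proof -
  assume "d dvd n" then obtain k where "n = d * k" by blast
  have "(monom 1 d :: 'b poly) ^ k - 1 = (monom 1 d - 1) * (\<Sum>i<k. (monom 1 d)^i)"
    by (rule power_diff_1_eq)
  moreover have "(monom 1 d :: 'b poly) ^ k = monom 1 n"
    using \<open>n = d * k\<close> by (simp add: monom_power)
  ultimately show ?thesis by (metis dvd_triv_left)
qed

lemma FF_root:
  fixes z :: complex
  assumes "FF m" "m > 0" "poly (map_poly of_int (cyclotomic m)) z = 0"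
  shows "z ^ m = 1"
proof -
  have e: "(monom 1 m - 1 :: int poly) = (\<Prod>d\<in>Dv m. cyclotomic d)" using assms(1) FF_def by simp
  have "z ^ m - 1 = poly (map_poly of_int (monom 1 m - 1 :: int poly)) z" by (simp only: poly_Xn1)
  also have "\<dots> = poly (map_poly of_int (\<Prod>d\<in>Dv m. cyclotomic d)) z" by (simp only: e)
  also have "\<dots> = (\<Prod>d\<in>Dv m. poly (map_poly of_int (cyclotomic d)) z)"
    by (simp add: mpi_prod poly_prod)
  also have "\<dots> = 0"
    using assms by (simp add: Dv_PD finite_PD n_notin_PD)
  finally show ?thesis by simp
qed

lemma FF_someroot:
  fixes z :: complex
  assumes "FF m" "m > 0" "z ^ m = 1"
  shows "\<exists>c\<in>Dv m. poly (map_poly of_int (cyclotomic c)) z = 0"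
proof -
  have e: "(monom 1 m - 1 :: int poly) = (\<Prod>d\<in>Dv m. cyclotomic d)" using assms(1) FF_def by simp
  have "0 = poly (map_poly of_int (monom 1 m - 1 :: int poly)) z" by (simp only: poly_Xn1 assms(3)) simp
  also have "\<dots> = poly (map_poly of_int (\<Prod>d\<in>Dv m. cyclotomic d)) z" by (simp only: e)
  also have "\<dots> = (\<Prod>d\<in>Dv m. poly (map_poly of_int (cyclotomic d)) z)"
    by (simp add: mpi_prod poly_prod)
  finally show ?thesis using finite_Dv[OF assms(2)] by (simp add: prod_zero_iff)
qed

lemma FF_double:
  fixes z :: complex
  assumes "FF m" "m > 0" "c \<in> Dv m" "c \<noteq> m"
    and "poly (map_poly of_int (cyclotomic m)) z = 0" "poly (map_poly of_int (cyclotomic c)) z = 0"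
  shows False
proof -
  have zm: "z ^ m = 1" using FF_root assms by blast
  hence z0: "z \<noteq> 0" using assms(2) by (metis power_0_left less_not_refl2 zero_neq_one)
  define R where "R = (\<Prod>d\<in>Dv m - {m} - {c}. cyclotomic d)"
  have fin: "finite (Dv m)" using finite_Dv assms(2) by blast
  have mD: "m \<in> Dv m" unfolding Dv_def by simp
  have "(\<Prod>d\<in>Dv m. cyclotomic d) = cyclotomic m * (\<Prod>d\<in>Dv m - {m}. cyclotomic d)"
    using fin mD by (simp add: prod.remove)
  also have "(\<Prod>d\<in>Dv m - {m}. cyclotomic d) = cyclotomic c * R"
    unfolding R_def using fin assms(3,4) by (subst prod.remove[of _ c]) auto
  finally have eq: "monom 1 m - 1 = cyclotomic m * (cyclotomic c * R)"
    using assms(1) unfolding FF_def by simp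
  define A where "A = map_poly (of_int :: int \<Rightarrow> complex) (cyclotomic m)"
  define B where "B = map_poly (of_int :: int \<Rightarrow> complex) (cyclotomic c)"
  define RR where "RR = map_poly (of_int :: int \<Rightarrow> complex) R"
  have "map_poly (of_int :: int \<Rightarrow> complex) (monom 1 m - 1) = A * (B * RR)"
    unfolding A_def B_def RR_def by (simp add: eq mpi_mult)
  hence "pderiv (map_poly (of_int :: int \<Rightarrow> complex) (monom 1 m - 1)) = pderiv (A * (B * RR))"
    by simp
  hence "poly (pderiv (map_poly (of_int :: int \<Rightarrow> complex) (monom 1 m - 1))) z = 0"
    using assms(5,6) unfolding A_def B_def by (simp add: pderiv_mult)
  moreover have "poly (pderiv (map_poly (of_int :: int \<Rightarrow> complex) (monom 1 m - 1))) z = of_nat m * z ^ (m - 1)"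
    by (simp add: mpi_diff mpi_monom pderiv_diff pderiv_monom poly_monom)
  ultimately show False using z0 assms(2) by simp
qed

lemma lc_unit:
  assumes "FF m" "m > 0"
  shows "lead_coeff (cyclotomic m) dvd 1"
proof -
  have fin: "finite (Dv m)" using finite_Dv assms(2) by blast
  have mD: "m \<in> Dv m" unfolding Dv_def by simp
  have "(\<Prod>d\<in>Dv m. cyclotomic d) = cyclotomic m * (\<Prod>d\<in>Dv m - {m}. cyclotomic d)"
    using fin mD by (simp add: prod.remove)
  hence "monom 1 m - 1 = cyclotomic m * (\<Prod>d\<in>Dv m - {m}. cyclotomic d)"
    using assms(1) unfolding FF_def by simp
  hence "lead_coeff (monom 1 m - 1 :: int poly) = lead_coeff (cyclotomic m) * lead_coeff (\<Prod>d\<in>Dv m - {m}. cyclotomic d)"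
    by (simp add: lead_coeff_mult)
  moreover have "lead_coeff (monom 1 m - 1 :: int poly) = 1"
  proof -
    have dm: "degree (monom 1 m - 1 :: int poly) = m"
    proof (rule antisym)
      show "degree (monom 1 m - 1 :: int poly) \<le> m"
        by (rule degree_diff_le) (simp_all add: degree_monom_le)
      show "m \<le> degree (monom 1 m - 1 :: int poly)"
        by (rule le_degree) (use assms(2) in simp)
    qed
    show ?thesis using assms(2) by (simp add: dm)
  qed
  ultimately show ?thesis by (metis dvd_triv_left)
qed


lemma cyc_coprime:
  assumes IH: "\<forall>m. 0 < m \<and> m < n \<longrightarrow> FF m" and d0: "0 < d" and dn: "d < n"
    and e0: "0 < e" and en: "e < n" and de: "d \<noteq> e"
  shows "coprime (cyclotomic d) (cyclotomic e)"
proof (rule coprimeI)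
  fix c assume cd: "c dvd cyclotomic d" and ce: "c dvd cyclotomic e"
  show "is_unit c"
  proof (cases "degree c = 0")
    case True
    then obtain a where ca: "c = [:a:]" by (rule degree_eq_zeroE)
    from cd obtain h where hh: "cyclotomic d = c * h" by (auto elim: dvdE)
    hence "lead_coeff (cyclotomic d) = a * lead_coeff h" by (simp add: ca lead_coeff_mult)
    moreover have "lead_coeff (cyclotomic d) dvd 1" using lc_unit IH d0 dn by blast
    ultimately have "a dvd 1" by (metis dvd_mult_left)
    thus ?thesis by (simp add: ca is_unit_const_poly_iff)
  next
    case False
    define cc where "cc = map_poly (of_int::int\<Rightarrow>complex) c"
    have "degree cc = degree c" unfolding cc_def by (simp add: degree_map_poly)
    hence "\<not> (\<exists>a l. a \<noteq> 0 \<and> l = 0 \<and> cc = pCons a l)" using False by auto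
    then obtain z where z: "poly cc z = 0" using fundamental_theorem_of_algebra_alt by blast
    have rootof: "poly (map_poly of_int (cyclotomic k)) z = 0" if "c dvd cyclotomic k" for k
    proof -
      from that obtain h where "cyclotomic k = c * h" by (auto elim: dvdE)
      hence "map_poly (of_int::int\<Rightarrow>complex) (cyclotomic k) = cc * map_poly of_int h"
        unfolding cc_def by (simp add: mpi_mult)
      thus ?thesis using z by simp
    qed
    have zd: "poly (map_poly of_int (cyclotomic d)) z = 0" using rootof cd by blast
    have ze: "poly (map_poly of_int (cyclotomic e)) z = 0" using rootof ce by blast
    have zd1: "z ^ d = 1" using FF_root IH d0 dn zd by blast
    have ze1: "z ^ e = 1" using FF_root IH e0 en ze by blast
    define g where "g = gcd d e"
    obtain x y where xy: "d * x = e * y + g" using bezout_nat[of d e] d0 unfolding g_def by auto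
    have "1 = z ^ (d * x)" by (simp add: power_mult zd1)
    also have "\<dots> = (z ^ e) ^ y * z ^ g" by (simp add: xy power_add power_mult)
    finally have zg: "z ^ g = 1" by (simp add: ze1)
    have g0: "0 < g" unfolding g_def using d0 by simp
    have gd: "g dvd d" "g dvd e" unfolding g_def by auto
    have gled: "g \<le> d" "g \<le> e" using gd d0 e0 by (auto dest: dvd_imp_le)
    have "FF g" using IH g0 gled dn by auto
    then obtain c' where c'D: "c' \<in> Dv g" and c'z: "poly (map_poly of_int (cyclotomic c')) z = 0"
      using FF_someroot g0 zg by blast
    have c'g: "c' dvd g" using c'D unfolding Dv_def by simp
    have c'le: "c' \<le> g" using c'g g0 by (auto dest: dvd_imp_le)
    obtain D where DD: "D = d \<or> D = e" and gD: "g < D"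
      using gled de by (metis order.not_eq_order_implies_strict gd(1) gd(2) dvd_antisym)
    have D0: "0 < D" "D < n" using DD d0 e0 dn en by auto
    have FD: "FF D" using IH D0 by blast
    have zD: "poly (map_poly of_int (cyclotomic D)) z = 0" using DD zd ze by auto
    have "g dvd D" using DD gd by auto
    hence "c' \<in> Dv D" using c'g unfolding Dv_def by (meson dvd_trans mem_Collect_eq)
    moreover have "c' \<noteq> D" using c'le gD by simp
    ultimately show ?thesis using FF_double[OF FD D0(1) _ _ zD c'z] by blast
  qed
qed

lemma FF_all: "0 < n \<Longrightarrow> FF n"
proof (induction n rule: less_induct)
  case (less n)
  have IH: "\<forall>m. 0 < m \<and> m < n \<longrightarrow> FF m" using less by blast
  have PDpos: "\<And>d. d \<in> PD n \<Longrightarrow> 0 < d \<and> d < n \<and> d dvd n"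
    unfolding PD_def using less.prems by (auto intro!: Nat.gr0I)
  have cdvd: "cyclotomic d dvd (monom 1 n - 1)" if "d \<in> PD n" for d
  proof -
    have d: "0 < d" "d < n" "d dvd n" using PDpos that by auto
    have fin: "finite (Dv d)" using finite_Dv d by blast
    have "(monom 1 d - 1 :: int poly) = (\<Prod>k\<in>Dv d. cyclotomic k)" using IH d FF_def by auto
    also have "\<dots> = cyclotomic d * (\<Prod>k\<in>Dv d - {d}. cyclotomic k)"
      using fin by (subst prod.remove[of _ d]) (auto simp: Dv_def)
    finally have "cyclotomic d dvd (monom 1 d - 1 :: int poly)" by (metis dvd_triv_left)
    thus ?thesis using Xdvd[OF d(3)] dvd_trans by blast
  qed
  have "\<forall>A. A \<subseteq> PD n \<longrightarrow> (\<Prod>d\<in>A. cyclotomic d) dvd (monom 1 n - 1)"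
  proof (intro allI impI)
    fix A assume AP: "A \<subseteq> PD n"
    have "finite A" using AP finite_PD finite_subset by blast
    from this AP show "(\<Prod>d\<in>A. cyclotomic d) dvd (monom 1 n - 1)"
    proof (induction A rule: finite_induct)
      case empty then show ?case by simp
    next
      case (insert x A)
      have cop: "coprime (cyclotomic x) (\<Prod>d\<in>A. cyclotomic d)"
      proof (rule prod_coprime_right)
        fix y assume "y \<in> A"
        hence "x \<noteq> y" "y \<in> PD n" using insert by auto
        moreover have "x \<in> PD n" using insert by auto
        ultimately show "coprime (cyclotomic x) (cyclotomic y)"
          using cyc_coprime[OF IH] PDpos by blast
      qed
      have "cyclotomic x * (\<Prod>d\<in>A. cyclotomic d) dvd (monom 1 n - 1)"
        by (rule divides_mult) (use insert cdvd cop in auto)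
      thus ?case using insert by simp
    qed
  qed
  hence dv: "(\<Prod>d\<in>PD n. cyclotomic d) dvd (monom 1 n - 1)" by blast
  have "cyclotomic n * (\<Prod>d\<in>PD n. cyclotomic d) = monom 1 n - 1"
    using cyc_simp[OF less.prems] dv by (simp add: dvd_div_mult_self)
  moreover have "(\<Prod>d\<in>Dv n. cyclotomic d) = cyclotomic n * (\<Prod>d\<in>PD n. cyclotomic d)"
    using Dv_PD[OF less.prems] finite_PD n_notin_PD by simp
  ultimately show ?case unfolding FF_def by simp
qed

lemma cyc_root_pow:
  fixes q :: "'b::comm_ring_1"
  assumes "0 < N" "is_cyclotomic_root N q"
  shows "q ^ N = 1"
proof -
  have "(monom 1 N - 1 :: int poly) = (\<Prod>d\<in>Dv N. cyclotomic d)" using FF_all[OF assms(1)] FF_def by simp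
  also have "\<dots> = cyclotomic N * (\<Prod>d\<in>PD N. cyclotomic d)"
    using Dv_PD[OF assms(1)] finite_PD n_notin_PD by simp
  finally have e: "(monom 1 N - 1 :: int poly) = cyclotomic N * (\<Prod>d\<in>PD N. cyclotomic d)" .
  have "q ^ N - 1 = poly (map_poly of_int (monom 1 N - 1 :: int poly)) q" by (simp only: poly_Xn1)
  also have "\<dots> = poly (map_poly of_int (cyclotomic N)) q * poly (map_poly of_int (\<Prod>d\<in>PD N. cyclotomic d)) q"
    by (simp only: e mpi_mult poly_mult)
  also have "\<dots> = 0" using assms(2) unfolding is_cyclotomic_root_def by simp
  finally show ?thesis by simp
qed




definition mvec :: "'a::zero \<Rightarrow> 'i \<Rightarrow> ('i \<Rightarrow> 'a)" where
  "mvec c i = (\<lambda>k. if k = i then c else 0)"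

lemma bvec_mono: "bvec i = mvec 1 i"
  by (simp add: bvec_def mvec_def)

lemma amul_mono_left:
  assumes "finite I" "i \<in> I"
  shows "amul I mu (mvec c i) w = (\<lambda>k. \<Sum>r\<in>I. c * w r * mu i r k)"
proof
  fix k
  have "amul I mu (mvec c i) w k = (\<Sum>s\<in>I. if s = i then (\<Sum>r\<in>I. c * w r * mu s r k) else 0)"
    unfolding amul_def mvec_def by (rule sum.cong) auto
  also have "\<dots> = (\<Sum>r\<in>I. c * w r * mu i r k)" using assms by simp
  finally show "amul I mu (mvec c i) w k = (\<Sum>r\<in>I. c * w r * mu i r k)" .
qed

lemma amul_mono_mono:
  assumes "finite I" "i \<in> I" "j \<in> I"
  shows "amul I mu (mvec c i) (mvec d j) = (\<lambda>k. c * d * mu i j k)"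
proof
  fix k
  have "amul I mu (mvec c i) (mvec d j) k = (\<Sum>r\<in>I. if r = j then c * d * mu i r k else 0)"
    apply (subst amul_mono_left[OF assms(1,2)])
    by (rule sum.cong) (simp_all add: mvec_def)
  also have "\<dots> = c * d * mu i j k" using assms by simp
  finally show "amul I mu (mvec c i) (mvec d j) k = c * d * mu i j k" .
qed

lemma amul_add_left:
  "amul I mu (\<lambda>k. v1 k + v2 k) w = (\<lambda>k. amul I mu v1 w k + amul I mu v2 w k)"
  unfolding amul_def by (simp add: ring_distribs sum.distrib)

lemma amul_add_right:
  "amul I mu v (\<lambda>k. w1 k + w2 k) = (\<lambda>k. amul I mu v w1 k + amul I mu v w2 k)"
  unfolding amul_def by (simp add: ring_distribs sum.distrib)

lemma amul_sum_left:
  "amul I mu (\<lambda>k. \<Sum>x\<in>A. c x * f x k) w k = (\<Sum>x\<in>A. c x * amul I mu (f x) w k)"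
  unfolding amul_def by (simp add: sum_distrib_left sum_distrib_right mult.assoc sum.swap[of _ A])

lemma amul_sum_left_fun:
  "amul I mu (\<lambda>k. \<Sum>x\<in>A. c x * f x k) w = (\<lambda>k. \<Sum>x\<in>A. c x * amul I mu (f x) w k)"
  by (rule ext) (rule amul_sum_left)

lemma gmu_mono:
  assumes "0 < N" "m < N" "n < N" "k < N" "l < N"
  shows "amul (BI N) (gmu N q u a) (mvec c (m,n)) (mvec d (k,l)) =
    mvec (c * d * q ^ (n * k) * (if m + k < N then 1 else u) * (if n + l < N then 1 else a))
         ((m + k) mod N, (n + l) mod N)"
proof -
  have fin: "finite (BI N)" unfolding BI_def by simp
  have "amul (BI N) (gmu N q u a) (mvec c (m,n)) (mvec d (k,l)) = (\<lambda>t. c * d * gmu N q u a (m,n) (k,l) t)"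
    by (rule amul_mono_mono) (use assms fin in \<open>auto simp: BI_def\<close>)
  also have "\<dots> = mvec (c * d * q ^ (n * k) * (if m + k < N then 1 else u) * (if n + l < N then 1 else a))
         ((m + k) mod N, (n + l) mod N)"
    by (rule ext) (auto simp: gmu_def mvec_def split: prod.split)
  finally show ?thesis .
qed


lemma mono_add_same: "(\<lambda>t. mvec x i t + mvec y i t) = mvec (x + y :: 'a::comm_ring_1) i"
  by (rule ext) (simp add: mvec_def)

lemma F_step:
  assumes N2: "2 \<le> N" and nN: "n < N"
  shows "(\<lambda>k. amul (BI N) (gmu N q u a) (amul (BI N) (gmu N q u a) (mvec \<kappa> (n,n)) (mvec e (1,0))) (\<lambda>t. mvec c (0,1) t + mvec d (1,0) t) k
            - amul (BI N) (gmu N q u a) (amul (BI N) (gmu N q u a) (mvec \<kappa> (n,n)) (\<lambda>t. mvec c (0,1) t + mvec d (1,0) t)) (mvec e (1,0)) k)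
         = mvec (\<kappa>*e*c*(if n+1<N then 1 else u)*(if n+1<N then 1 else a)*(q^n - q^((n+1) mod N))) ((n+1) mod N, (n+1) mod N)"
proof (cases "n + 1 < N")
  case True
  have N0: "0 < N" "1 < N" using N2 by auto
  show ?thesis using True N0 nN
    apply (simp add: amul_add_right amul_add_left gmu_mono)
    apply (simp add: fun_eq_iff mvec_def algebra_simps)
    done
next
  case False
  have N0: "0 < N" "1 < N" using N2 by auto
  have n: "n = N - 1" using False nN by simp
  show ?thesis using False N0 nN
    apply (simp add: amul_add_right amul_add_left gmu_mono)
    apply (simp add: fun_eq_iff mvec_def algebra_simps)
    done
qed


definition Ul :: letter where "Ul = (0, (0, 0))"
definition Gl :: letter where "Gl = (0, (1, 0))"
definition Xl :: letter where "Xl = (0, (0, 1))"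

definition blk :: "bool \<Rightarrow> letter list" where
  "blk b = (if b then [Gl, Xl] else [Xl, Gl])"

definition bw :: "bool list \<Rightarrow> letter list" where
  "bw bs = concat (map blk bs)"

definition sg :: "bool list \<Rightarrow> 'a::comm_ring_1" where
  "sg bs = prod_list (map (\<lambda>b. if b then 1 else -1) bs)"

definition LL :: "nat \<Rightarrow> bool list set" where
  "LL n = {bs. length bs = n}"

definition UG :: "nat \<Rightarrow> letter list" where
  "UG N = replicate N Ul @ replicate N Gl"

definition KK :: "nat \<Rightarrow> 'a::comm_ring_1 \<Rightarrow> 'a" where
  "KK N q = (\<Prod>i<N-1. q^i - q^(Suc i)) * (q^(N-1) - 1)"

definition PP :: "nat \<Rightarrow> 'a::comm_ring_1 \<Rightarrow> 'a \<Rightarrow> letter list \<Rightarrow> 'a" where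
  "PP N q a w = (\<Sum>bs\<in>LL N. if bw bs = w then sg bs else 0) - (if w = UG N then KK N q * a else 0)"

lemma finite_LL: "finite (LL n)"
proof -
  have "LL n = {xs. set xs \<subseteq> (UNIV::bool set) \<and> length xs = n}" unfolding LL_def by auto
  thus ?thesis using finite_lists_length_eq[of "UNIV::bool set" n] by simp
qed

lemma LL_Suc: "LL (Suc n) = (\<lambda>bs. bs @ [True]) ` LL n \<union> (\<lambda>bs. bs @ [False]) ` LL n"
proof
  show "LL (Suc n) \<subseteq> (\<lambda>bs. bs @ [True]) ` LL n \<union> (\<lambda>bs. bs @ [False]) ` LL n"
  proof
    fix xs assume "xs \<in> LL (Suc n)"
    hence l: "length xs = Suc n" unfolding LL_def by simp
    then obtain ys y where xs: "xs = ys @ [y]" by (cases xs rule: rev_exhaust) auto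
    hence ys: "ys \<in> LL n" using l unfolding LL_def by simp
    show "xs \<in> (\<lambda>bs. bs @ [True]) ` LL n \<union> (\<lambda>bs. bs @ [False]) ` LL n"
    proof (cases y)
      case True thus ?thesis using xs ys by blast
    next
      case False thus ?thesis using xs ys by blast
    qed
  qed
  show "(\<lambda>bs. bs @ [True]) ` LL n \<union> (\<lambda>bs. bs @ [False]) ` LL n \<subseteq> LL (Suc n)"
    unfolding LL_def by auto
qed

lemma sum_LL_Suc:
  "(\<Sum>bs\<in>LL (Suc n). f bs) = (\<Sum>bs\<in>LL n. f (bs @ [True]) + f (bs @ [False]))"
proof -
  have disj: "(\<lambda>bs. bs @ [True]) ` LL n \<inter> (\<lambda>bs. bs @ [False]) ` LL n = {}" by auto
  have "(\<Sum>bs\<in>LL (Suc n). f bs) = (\<Sum>bs\<in>(\<lambda>bs. bs @ [True]) ` LL n. f bs) + (\<Sum>bs\<in>(\<lambda>bs. bs @ [False]) ` LL n. f bs)"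
    unfolding LL_Suc by (rule sum.union_disjoint) (use finite_LL disj in auto)
  also have "\<dots> = (\<Sum>bs\<in>LL n. f (bs @ [True])) + (\<Sum>bs\<in>LL n. f (bs @ [False]))"
    by (subst sum.reindex, simp add: inj_on_def, subst sum.reindex, simp_all add: inj_on_def)
  finally show ?thesis by (simp add: sum.distrib)
qed

lemma E_snoc:
  "B_eval_word N q u a phi (w @ [l]) = amul (BI N) (B_mu N q u a) (B_eval_word N q u a phi w) (phi (fst l) (snd l))"
  by (simp add: B_eval_word_def)

lemma E_nil: "B_eval_word N q u a phi [] = mvec 1 (0,0)"
  by (simp add: B_eval_word_def bvec_mono)

lemma S_Suc:
  fixes phi :: "nat \<Rightarrow> nat \<times> nat \<Rightarrow> nat \<times> nat \<Rightarrow> 'a::comm_ring_1" and N :: nat and q u a :: 'a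
  defines "M \<equiv> amul (BI N) (B_mu N q u a)"
  defines "E \<equiv> B_eval_word N q u a phi"
  shows "(\<lambda>k. \<Sum>bs\<in>LL (Suc n). sg bs * E (bw bs) k) =
    (\<lambda>k. M (M (\<lambda>k. \<Sum>bs\<in>LL n. sg bs * E (bw bs) k) (phi 0 (1,0))) (phi 0 (0,1)) k
       - M (M (\<lambda>k. \<Sum>bs\<in>LL n. sg bs * E (bw bs) k) (phi 0 (0,1))) (phi 0 (1,0)) k)"
proof
  fix k
  have bwT: "E (bw (bs @ [True])) = M (M (E (bw bs)) (phi 0 (1,0))) (phi 0 (0,1))" for bs
  proof -
    have "bw (bs @ [True]) = (bw bs @ [Gl]) @ [Xl]" by (simp add: bw_def blk_def)
    thus ?thesis unfolding E_def M_def by (simp only: E_snoc) (simp add: Gl_def Xl_def)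
  qed
  have bwF: "E (bw (bs @ [False])) = M (M (E (bw bs)) (phi 0 (0,1))) (phi 0 (1,0))" for bs
  proof -
    have "bw (bs @ [False]) = (bw bs @ [Xl]) @ [Gl]" by (simp add: bw_def blk_def)
    thus ?thesis unfolding E_def M_def by (simp only: E_snoc) (simp add: Gl_def Xl_def)
  qed
  have sgT: "sg (bs @ [True]) = (sg bs :: 'a)" for bs by (simp add: sg_def)
  have sgF: "sg (bs @ [False]) = - (sg bs :: 'a)" for bs by (simp add: sg_def)
  have "(\<Sum>bs\<in>LL (Suc n). sg bs * E (bw bs) k) =
     (\<Sum>bs\<in>LL n. sg bs * M (M (E (bw bs)) (phi 0 (1,0))) (phi 0 (0,1)) k
        - sg bs * M (M (E (bw bs)) (phi 0 (0,1))) (phi 0 (1,0)) k)"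
    unfolding sum_LL_Suc sgT sgF bwT bwF by simp
  also have "\<dots> = M (M (\<lambda>k. \<Sum>bs\<in>LL n. sg bs * E (bw bs) k) (phi 0 (1,0))) (phi 0 (0,1)) k
       - M (M (\<lambda>k. \<Sum>bs\<in>LL n. sg bs * E (bw bs) k) (phi 0 (0,1))) (phi 0 (1,0)) k"
    unfolding M_def by (simp only: amul_sum_left_fun sum_subtractf)
  finally show "(\<Sum>bs\<in>LL (Suc n). sg bs * E (bw bs) k) = M (M (\<lambda>k. \<Sum>bs\<in>LL n. sg bs * E (bw bs) k) (phi 0 (1,0))) (phi 0 (0,1)) k
       - M (M (\<lambda>k. \<Sum>bs\<in>LL n. sg bs * E (bw bs) k) (phi 0 (0,1))) (phi 0 (1,0)) k" .
qed


lemma LL_0: "LL 0 = {[]}" unfolding LL_def by auto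

lemma S_formula:
  fixes phi :: "nat \<Rightarrow> nat \<times> nat \<Rightarrow> nat \<times> nat \<Rightarrow> 'a::comm_ring_1" and N :: nat and q u a c d e :: 'a
  assumes N2: "2 \<le> N"
    and G: "phi 0 (1,0) = mvec e (1,0)"
    and X: "phi 0 (0,1) = (\<lambda>t. mvec c (0,1) t + mvec d (1,0) t)"
  shows "n < N \<Longrightarrow> (\<lambda>k. \<Sum>bs\<in>LL n. sg bs * B_eval_word N q u a phi (bw bs) k)
     = mvec ((c*e)^n * (\<Prod>i<n. q^i - q^(Suc i))) (n,n)"
proof (induction n)
  case 0
  show ?case by (simp add: LL_0 sg_def bw_def E_nil)
next
  case (Suc n)
  have nN: "n < N" "n + 1 < N" using Suc.prems by auto
  show ?case
    unfolding S_Suc Suc.IH[OF nN(1)] G X B_mu_def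
    using F_step[OF N2 nN(1), of q u a "(c*e)^n * (\<Prod>i<n. q^i - q^(Suc i))" e c d] nN
    by (simp add: algebra_simps)
qed

lemma S_N:
  fixes phi :: "nat \<Rightarrow> nat \<times> nat \<Rightarrow> nat \<times> nat \<Rightarrow> 'a::comm_ring_1" and N :: nat and q u a c d e :: 'a
  assumes N2: "2 \<le> N"
    and G: "phi 0 (1,0) = mvec e (1,0)"
    and X: "phi 0 (0,1) = (\<lambda>t. mvec c (0,1) t + mvec d (1,0) t)"
  shows "(\<lambda>k. \<Sum>bs\<in>LL N. sg bs * B_eval_word N q u a phi (bw bs) k)
     = mvec ((c*e)^N * u * a * KK N q) (0,0)"
proof -
  obtain n where n: "N = Suc n" using N2 by (cases N) auto
  have nN: "n < N" "\<not> n + 1 < N" using n by auto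
  have "(\<lambda>k. \<Sum>bs\<in>LL N. sg bs * B_eval_word N q u a phi (bw bs) k)
     = mvec ((c*e)^n * (\<Prod>i<n. q^i - q^(Suc i)) *e*c*u*a*(q^n - q^((n+1) mod N))) ((n+1) mod N, (n+1) mod N)"
    unfolding n S_Suc S_formula[where N=N and phi=phi and e=e and c=c and d=d and q=q and u=u and a=a and n=n, OF N2 G X nN(1), unfolded n] G X B_mu_def
    using F_step[OF N2 nN(1), of q u a "(c*e)^n * (\<Prod>i<n. q^i - q^(Suc i))" e c d] nN
    unfolding n by simp
  also have "\<dots> = mvec ((c*e)^N * u * a * KK N q) (0,0)"
    unfolding KK_def n by (simp add: algebra_simps)
  finally show ?thesis .
qed

lemma replicate_snoc: "replicate (Suc j) x = replicate j x @ [x]"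
  by (simp add: replicate_append_same)

lemma E_U:
  fixes phi :: "nat \<Rightarrow> nat \<times> nat \<Rightarrow> nat \<times> nat \<Rightarrow> 'a::comm_ring_1" and N :: nat and q u a c :: 'a
  assumes N2: "2 \<le> N" and U: "phi 0 (0,0) = mvec c (0,0)"
  shows "B_eval_word N q u a phi (replicate j Ul) = mvec (c^j) (0,0)"
proof (induction j)
  case 0 show ?case by (simp add: E_nil)
next
  case (Suc j)
  show ?case unfolding replicate_snoc E_snoc Suc.IH using N2
    apply (simp only: Ul_def prod.sel U)
    by (simp add: B_mu_def gmu_mono algebra_simps)
qed

lemma E_UG_j:
  fixes phi :: "nat \<Rightarrow> nat \<times> nat \<Rightarrow> nat \<times> nat \<Rightarrow> 'a::comm_ring_1" and N :: nat and q u a c e :: 'a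
  assumes N2: "2 \<le> N" and U: "phi 0 (0,0) = mvec c (0,0)" and G: "phi 0 (1,0) = mvec e (1,0)"
  shows "j < N \<Longrightarrow> B_eval_word N q u a phi (replicate N Ul @ replicate j Gl) = mvec (c^N * e^j) (j,0)"
proof (induction j)
  case 0 show ?case using E_U[where N=N and phi=phi and c=c and q=q and u=u and a=a and j=N, OF N2 U] by simp
next
  case (Suc j)
  have jN: "j < N" "j + 1 < N" using Suc.prems by auto
  show ?case unfolding replicate_snoc append_assoc[symmetric] E_snoc Suc.IH[OF jN(1)] using N2 jN
    apply (simp only: Gl_def prod.sel G)
    by (simp add: B_mu_def gmu_mono algebra_simps)
qed

lemma E_UG:
  fixes phi :: "nat \<Rightarrow> nat \<times> nat \<Rightarrow> nat \<times> nat \<Rightarrow> 'a::comm_ring_1" and N :: nat and q u a c e :: 'a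
  assumes N2: "2 \<le> N" and U: "phi 0 (0,0) = mvec c (0,0)" and G: "phi 0 (1,0) = mvec e (1,0)"
  shows "B_eval_word N q u a phi (UG N) = mvec (c^N * e^N * u) (0,0)"
proof -
  obtain n where n: "N = Suc n" using N2 by (cases N) auto
  have nN: "n < N" "\<not> n + 1 < N" using n by auto
  show ?thesis unfolding UG_def n replicate_snoc[of n Gl] append_assoc[symmetric] E_snoc
    using E_UG_j[where N=N and phi=phi and c=c and e=e and q=q and u=u and a=a and j=n, OF N2 U G nN(1)] N2 nN unfolding n
    apply (simp only: Gl_def prod.sel G)
    by (simp add: B_mu_def gmu_mono algebra_simps)
qed


definition WW :: "nat \<Rightarrow> letter list set" where
  "WW N = bw ` LL N \<union> {UG N}"

lemma finite_WW: "finite (WW N)"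
  unfolding WW_def using finite_LL by simp

lemma PP_supp: "PP N q a w \<noteq> 0 \<Longrightarrow> w \<in> WW N"
proof (rule ccontr)
  assume nz: "PP N q a w \<noteq> 0" and nw: "w \<notin> WW N"
  have "\<forall>bs\<in>LL N. bw bs \<noteq> w" using nw unfolding WW_def by auto
  moreover have "w \<noteq> UG N" using nw unfolding WW_def by auto
  ultimately have "PP N q a w = 0" unfolding PP_def by simp
  thus False using nz by simp
qed

lemma eval_PP:
  fixes phi :: "nat \<Rightarrow> nat \<times> nat \<Rightarrow> nat \<times> nat \<Rightarrow> 'a::comm_ring_1" and N :: nat and q u bb a c d e :: 'a
  assumes N2: "2 \<le> N"
    and U: "phi 0 (0,0) = mvec c (0,0)"
    and G: "phi 0 (1,0) = mvec e (1,0)"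
    and X: "phi 0 (0,1) = (\<lambda>t. mvec c (0,1) t + mvec d (1,0) t)"
  shows "B_eval N q u bb phi (PP N q a) = mvec (KK N q * (c*e)^N * u * (bb - a)) (0,0)"
proof
  fix k
  define E where "E = B_eval_word N q u bb phi"
  have "B_eval N q u bb phi (PP N q a) k = (\<Sum>w\<in>{w. PP N q a w \<noteq> 0}. PP N q a w * E w k)"
    unfolding B_eval_def E_def by simp
  also have "\<dots> = (\<Sum>w\<in>WW N. PP N q a w * E w k)"
    by (rule sum.mono_neutral_left) (use finite_WW PP_supp in auto)
  also have "\<dots> = (\<Sum>w\<in>WW N. (\<Sum>bs\<in>LL N. if bw bs = w then sg bs * E w k else 0))
      - (\<Sum>w\<in>WW N. (if w = UG N then KK N q * a * E w k else 0))"
  proof -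
    have ifm: "(if P then x else 0) * r = (if P then x * r else 0)" for P and x r :: 'a by simp
    have "PP N q a w * E w k = (\<Sum>bs\<in>LL N. if bw bs = w then sg bs * E w k else 0)
      - (if w = UG N then KK N q * a * E w k else 0)" for w
      unfolding PP_def left_diff_distrib sum_distrib_right ifm by simp
    thus ?thesis by (simp add: sum_subtractf)
  qed
  also have "(\<Sum>w\<in>WW N. (\<Sum>bs\<in>LL N. if bw bs = w then sg bs * E w k else 0))
      = (\<Sum>bs\<in>LL N. sg bs * E (bw bs) k)"
  proof -
    have "(\<Sum>w\<in>WW N. (\<Sum>bs\<in>LL N. if bw bs = w then sg bs * E w k else 0))
        = (\<Sum>bs\<in>LL N. (\<Sum>w\<in>WW N. if bw bs = w then sg bs * E w k else 0))"
      by (rule sum.swap)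
    also have "\<dots> = (\<Sum>bs\<in>LL N. sg bs * E (bw bs) k)"
    proof (rule sum.cong)
      fix bs assume "bs \<in> LL N"
      hence "bw bs \<in> WW N" unfolding WW_def by auto
      thus "(\<Sum>w\<in>WW N. if bw bs = w then sg bs * E w k else 0) = sg bs * E (bw bs) k"
        using finite_WW by (simp add: sum.delta)
    qed simp
    finally show ?thesis .
  qed
  also have "(\<Sum>w\<in>WW N. (if w = UG N then KK N q * a * E w k else 0)) = KK N q * a * E (UG N) k"
    using finite_WW by (simp add: sum.delta' WW_def)
  finally have "B_eval N q u bb phi (PP N q a) k = (\<Sum>bs\<in>LL N. sg bs * E (bw bs) k) - KK N q * a * E (UG N) k" .
  also have "\<dots> = mvec ((c*e)^N * u * bb * KK N q) (0,0) k - KK N q * a * mvec (c^N * e^N * u) (0,0) k"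
    using fun_cong[OF S_N[where N=N and phi=phi and e=e and c=c and d=d and q=q and u=u and a=bb, OF N2 G X], of k]
      E_UG[where N=N and phi=phi and c=c and e=e and q=q and u=u and a=bb, OF N2 U G]
    unfolding E_def by simp
  also have "\<dots> = mvec (KK N q * (c*e)^N * u * (bb - a)) (0,0) k"
    by (simp add: mvec_def algebra_simps power_mult_distrib)
  finally show "B_eval N q u bb phi (PP N q a) k = mvec (KK N q * (c*e)^N * u * (bb - a)) (0,0) k" .
qed

lemma T_elem_PP:
  assumes N2: "2 \<le> N"
  shows "T_elem N (PP N q a)"
  unfolding T_elem_def
proof (intro conjI allI impI)
  show "finite {w. PP N q a w \<noteq> 0}"
    by (rule finite_subset[OF _ finite_WW]) (use PP_supp in auto)
  fix w assume "PP N q a w \<noteq> 0"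
  hence "w \<in> WW N" by (rule PP_supp)
  hence "set w \<subseteq> {Ul, Gl, Xl}"
    unfolding WW_def UG_def bw_def blk_def by (auto split: if_splits)
  moreover have "snd Ul \<in> BI N" "snd Gl \<in> BI N" "snd Xl \<in> BI N"
    using N2 by (auto simp: Ul_def Gl_def Xl_def BI_def)
  ultimately show "\<forall>c\<in>set w. snd c \<in> BI N" by auto
qed




definition MU :: "nat \<Rightarrow> 'a::comm_ring_1 \<Rightarrow> 'a \<Rightarrow> 'a \<Rightarrow> _" where
  "MU N q u a = tmu (gmu N q u a) (gmu N q 1 0)"

definition I2 :: "nat \<Rightarrow> ((nat \<times> nat) \<times> (nat \<times> nat)) set" where
  "I2 N = BI N \<times> BI N"

definition Rg :: "(nat \<times> nat) \<times> (nat \<times> nat) \<Rightarrow> 'a::comm_ring_1" where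
  "Rg = tens (bvec g_idx) (bvec g_idx)"

definition Rx :: "(nat \<times> nat) \<times> (nat \<times> nat) \<Rightarrow> 'a::comm_ring_1" where
  "Rx = (\<lambda>t. tens (bvec one_idx) (bvec x_idx) t + tens (bvec x_idx) (bvec g_idx) t)"

definition FX :: "nat \<Rightarrow> 'a::comm_ring_1 \<Rightarrow> 'a \<Rightarrow> 'a \<Rightarrow> nat \<Rightarrow> _" where
  "FX N q u a n = apow (I2 N) (MU N q u a) (one_idx, one_idx) Rx n"

lemma tens_bvec: "tens (bvec i) (bvec j) = mvec 1 (i, j)"
  by (rule ext) (simp add: tens_def bvec_def mvec_def split: prod.split)

lemma Rg_mono: "Rg = mvec 1 ((1,0),(1,0))"
  unfolding Rg_def tens_bvec by simp

lemma Rx_mono: "Rx = (\<lambda>t. mvec 1 ((0,0),(0,1)) t + mvec 1 ((0,1),(1,0)) t)"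
  unfolding Rx_def tens_bvec by simp

lemma MU_eval: "MU N q u a ((m,n),(j,l)) ((m2,n2),(j2,l2)) ((m',n'),(j',l')) =
   gmu N q u a (m,n) (m2,n2) (m',n') * gmu N q 1 0 (j,l) (j2,l2) (j',l')"
  by (simp add: MU_def tmu_def)

lemma gmu_nz: "gmu N q u a (m,n) (k,l) (m',n') \<noteq> 0 \<Longrightarrow> m' = (m+k) mod N \<and> n' = (n+l) mod N"
  by (simp add: gmu_def split: if_splits)

lemma finite_BI: "finite (BI N)" unfolding BI_def by simp
lemma finite_I2: "finite (I2 N)" unfolding I2_def using finite_BI by simp

lemma amul_nz:
  assumes "amul I mu v w t \<noteq> 0"
  shows "\<exists>s\<in>I. \<exists>r\<in>I. v s \<noteq> 0 \<and> w r \<noteq> 0 \<and> mu s r t \<noteq> 0"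
proof (rule ccontr)
  assume H: "\<not> ?thesis"
  have "v s * w r * mu s r t = 0" if "s \<in> I" "r \<in> I" for s r
  proof -
    have "v s = 0 \<or> w r = 0 \<or> mu s r t = 0" using H that by blast
    thus ?thesis by auto
  qed
  hence "amul I mu v w t = 0" unfolding amul_def by simp
  thus False using assms by simp
qed

lemma amul_cong:
  assumes "\<And>s r. s \<in> I \<Longrightarrow> r \<in> I \<Longrightarrow> v s \<noteq> 0 \<Longrightarrow> w r \<noteq> 0 \<Longrightarrow> mu1 s r = mu2 s r"
  shows "amul I mu1 v w = amul I mu2 v w"
proof (rule ext)
  fix k
  have "v s * w r * mu1 s r k = v s * w r * mu2 s r k" if "s \<in> I" "r \<in> I" for s r
    using assms[OF that] by (cases "v s = 0"; cases "w r = 0") auto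
  thus "amul I mu1 v w k = amul I mu2 v w k" unfolding amul_def by (auto intro!: sum.cong)
qed

lemma amul_mono_right:
  assumes "finite I" "j \<in> I"
  shows "amul I mu v (mvec d j) = (\<lambda>k. \<Sum>s\<in>I. v s * d * mu s j k)"
proof
  fix k
  have "amul I mu v (mvec d j) k = (\<Sum>s\<in>I. \<Sum>r\<in>I. if r = j then v s * d * mu s j k else 0)"
    unfolding amul_def mvec_def by (intro sum.cong) auto
  also have "\<dots> = (\<Sum>s\<in>I. v s * d * mu s j k)" using assms by simp
  finally show "amul I mu v (mvec d j) k = (\<Sum>s\<in>I. v s * d * mu s j k)" .
qed

lemma sum_single:
  assumes "finite I" "s0 \<in> I" "\<And>s. s \<in> I \<Longrightarrow> s \<noteq> s0 \<Longrightarrow> f s = 0"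
  shows "(\<Sum>s\<in>I. f s) = f s0"
proof -
  have "(\<Sum>s\<in>I. f s) = f s0 + (\<Sum>s\<in>I - {s0}. f s)" using assms(1,2) by (simp add: sum.remove)
  also have "(\<Sum>s\<in>I - {s0}. f s) = 0" using assms(3) by simp
  finally show ?thesis by simp
qed

lemma R1:
  assumes "m < N"
  shows "apow (I2 N) (MU N q u a) (one_idx, one_idx) Rg m = mvec 1 ((m,0),(m,0))"
  using assms
proof (induction m)
  case 0 show ?case by (simp add: bvec_mono)
next
  case (Suc m)
  have mN: "m < N" "m + 1 < N" using Suc.prems by auto
  have "apow (I2 N) (MU N q u a) (one_idx, one_idx) Rg (Suc m) = amul (I2 N) (MU N q u a) (mvec 1 ((m,0),(m,0))) (mvec 1 ((1,0),(1,0)))"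
    using Suc.IH[OF mN(1)] by (simp add: Rg_mono)
  also have "\<dots> = (\<lambda>t. 1 * 1 * MU N q u a ((m,0),(m,0)) ((1,0),(1,0)) t)"
    by (rule amul_mono_mono) (use finite_I2 mN in \<open>auto simp: I2_def BI_def\<close>)
  also have "\<dots> = mvec 1 ((Suc m,0),(Suc m,0))"
  proof (rule ext)
    fix t :: "(nat \<times> nat) \<times> (nat \<times> nat)"
    obtain a1 a2 a3 a4 where t: "t = ((a1,a2),(a3,a4))" by (metis prod.exhaust)
    show "1 * 1 * MU N q u a ((m,0),(m,0)) ((1,0),(1,0)) t = mvec 1 ((Suc m,0),(Suc m,0)) t"
      unfolding t MU_eval using mN by (auto simp: gmu_def mvec_def)
  qed
  finally show ?case .
qed


lemma FX_Suc: "FX N q u a (Suc n) = amul (I2 N) (MU N q u a) (FX N q u a n) Rx"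
  by (simp add: FX_def)

lemma FX_0: "FX N q u a 0 = mvec 1 ((0,0),(0,0))"
  by (simp add: FX_def bvec_mono)

lemma Rx_nz: "Rx r \<noteq> (0::'a::comm_ring_1) \<Longrightarrow> r = ((0,0),(0,1)) \<or> r = ((0,1),(1,0))"
  by (auto simp: Rx_mono mvec_def split: if_splits)

lemma MU_nz:
  assumes "MU N q u a ((s1,s2),(s3,s4)) ((r1,r2),(r3,r4)) ((b1,b2),(h1,h2)) \<noteq> 0"
  shows "b1 = (s1+r1) mod N \<and> b2 = (s2+r2) mod N \<and> h1 = (s3+r3) mod N \<and> h2 = (s4+r4) mod N"
proof -
  have "gmu N q u a (s1,s2) (r1,r2) (b1,b2) \<noteq> 0" "gmu N q 1 0 (s3,s4) (r3,r4) (h1,h2) \<noteq> 0"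
    using assms unfolding MU_eval by auto
  thus ?thesis by (auto dest!: gmu_nz)
qed

lemma Rx_supp:
  assumes N0: "0 < N"
  shows "n < N \<Longrightarrow> FX N q u a n ((b1,b2),(h1,h2)) \<noteq> 0 \<Longrightarrow> b1 < N \<and> b2 < N \<and> h1 < N \<and> h2 < N \<and> b1 = 0 \<and> b2 \<le> n"
proof (induction n arbitrary: b1 b2 h1 h2)
  case 0
  thus ?case using N0 by (auto simp: FX_0 mvec_def split: if_splits)
next
  case (Suc n)
  have nN: "n < N" using Suc.prems by simp
  from Suc.prems(2) obtain s r where sr: "s \<in> I2 N" "r \<in> I2 N" "FX N q u a n s \<noteq> 0" "Rx r \<noteq> (0::'a)"
    "MU N q u a s r ((b1,b2),(h1,h2)) \<noteq> 0"
    unfolding FX_Suc by (blast dest: amul_nz)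
  obtain s1 s2 s3 s4 where s: "s = ((s1,s2),(s3,s4))" by (metis prod.exhaust)
  have IH: "s1 = 0 \<and> s2 \<le> n" using Suc.IH[OF nN, of s1 s2 s3 s4] sr(3) s by simp
  have r: "r = ((0,0),(0,1)) \<or> r = ((0,1),(1,0))" using Rx_nz sr(4) by blast
  show ?case
  proof (rule disjE[OF r])
    assume r1: "r = ((0,0),(0,1))"
    have "b1 = (s1+0) mod N \<and> b2 = (s2+0) mod N \<and> h1 = (s3+0) mod N \<and> h2 = (s4+1) mod N"
      using MU_nz[of N q u a s1 s2 s3 s4 0 0 0 1] sr(5) s r1 by simp
    moreover have "s2 mod N \<le> Suc n" using IH mod_less_eq_dividend[of s2 N] by linarith
    ultimately show ?thesis using IH N0 by auto
  next
    assume r2: "r = ((0,1),(1,0))"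
    have "b1 = (s1+0) mod N \<and> b2 = (s2+1) mod N \<and> h1 = (s3+1) mod N \<and> h2 = (s4+0) mod N"
      using MU_nz[of N q u a s1 s2 s3 s4 0 1 1 0] sr(5) s r2 by simp
    moreover have "Suc s2 mod N \<le> Suc n" using IH mod_less_eq_dividend[of "Suc s2" N] by linarith
    ultimately show ?thesis using IH N0 by auto
  qed
qed


lemma Rx_slice:
  assumes N0: "0 < N"
  shows "n < N \<Longrightarrow> j < N \<Longrightarrow> l < N \<Longrightarrow> FX N q u a n ((0,0),(j,l)) = (if j = 0 \<and> l = n then 1 else 0)"
proof (induction n arbitrary: j l)
  case 0
  thus ?case by (auto simp: FX_0 mvec_def)
next
  case (Suc n)
  have nN: "n < N" "n + 1 < N" using Suc.prems by auto
  define t where "t = ((0::nat,0::nat),(j,l))"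
  define r1 where "r1 = ((0::nat,0::nat),(0::nat,1::nat))"
  define r2 where "r2 = ((0::nat,1::nat),(1::nat,0::nat))"
  define s0 where "s0 = ((0::nat,0::nat),(0::nat,n))"
  have r12: "r1 \<in> I2 N" "r2 \<in> I2 N" "s0 \<in> I2 N" using nN unfolding r1_def r2_def s0_def I2_def BI_def by auto
  have "FX N q u a (Suc n) t = (\<Sum>s\<in>I2 N. FX N q u a n s * 1 * MU N q u a s r1 t) + (\<Sum>s\<in>I2 N. FX N q u a n s * 1 * MU N q u a s r2 t)"
    unfolding FX_Suc Rx_mono amul_add_right r1_def[symmetric] r2_def[symmetric]
    by (simp add: amul_mono_right[OF finite_I2 r12(1)] amul_mono_right[OF finite_I2 r12(2)])
  also have "(\<Sum>s\<in>I2 N. FX N q u a n s * 1 * MU N q u a s r2 t) = 0"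
  proof (rule sum.neutral, rule ballI)
    fix s assume "s \<in> I2 N"
    obtain s1 s2 s3 s4 where s: "s = ((s1,s2),(s3,s4))" by (metis prod.exhaust)
    show "FX N q u a n s * 1 * MU N q u a s r2 t = 0"
    proof (rule ccontr)
      assume H: "FX N q u a n s * 1 * MU N q u a s r2 t \<noteq> 0"
      hence h1: "FX N q u a n s \<noteq> 0" "MU N q u a s r2 t \<noteq> 0" by auto
      have "s1 = 0 \<and> s2 \<le> n" using Rx_supp[OF N0 nN(1)] h1(1) s by blast
      moreover have "0 = (s2 + 1) mod N" using MU_nz[of N q u a s1 s2 s3 s4 0 1 1 0 0 0 j l] h1(2) s
        unfolding r2_def t_def by simp
      ultimately show False using nN by simp
    qed
  qed
  also have "(\<Sum>s\<in>I2 N. FX N q u a n s * 1 * MU N q u a s r1 t) = FX N q u a n s0 * 1 * MU N q u a s0 r1 t"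
  proof (rule sum_single[OF finite_I2 r12(3)])
    fix s assume sI: "s \<in> I2 N" and ss0: "s \<noteq> s0"
    obtain s1 s2 s3 s4 where s: "s = ((s1,s2),(s3,s4))" by (metis prod.exhaust)
    show "FX N q u a n s * 1 * MU N q u a s r1 t = 0"
    proof (rule ccontr)
      assume H: "FX N q u a n s * 1 * MU N q u a s r1 t \<noteq> 0"
      hence h1: "FX N q u a n s \<noteq> 0" "MU N q u a s r1 t \<noteq> 0" by auto
      have sp: "s1 = 0 \<and> s2 \<le> n \<and> s3 < N \<and> s4 < N" using Rx_supp[OF N0 nN(1)] h1(1) s by blast
      moreover have "0 = (s2 + 0) mod N" using MU_nz[of N q u a s1 s2 s3 s4 0 0 0 1 0 0 j l] h1(2) s
        unfolding r1_def t_def by simp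
      ultimately have s2: "s2 = 0" using nN by simp
      have "FX N q u a n s = (if s3 = 0 \<and> s4 = n then 1 else 0)"
        using Suc.IH[OF nN(1), of s3 s4] sp s s2 by simp
      hence "s3 = 0 \<and> s4 = n" using h1(1) by (simp split: if_splits)
      thus False using ss0 s sp s2 unfolding s0_def by simp
    qed
  qed
  also have "FX N q u a n s0 = 1" using Suc.IH[OF nN(1), of 0 n] nN N0 unfolding s0_def by simp
  also have "MU N q u a s0 r1 t = (if j = 0 \<and> l = Suc n then 1 else 0)"
    unfolding s0_def r1_def t_def MU_eval using nN N0 Suc.prems by (auto simp: gmu_def)
  finally show ?case unfolding t_def by simp
qed


lemma FX_eq:
  assumes N0: "0 < N"
  shows "n < N \<Longrightarrow> FX N q u a n = FX N q 1 0 n"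
proof (induction n)
  case 0 show ?case by (simp add: FX_0)
next
  case (Suc n)
  have nN: "n < N" "n + 1 < N" using Suc.prems by auto
  have "FX N q u a (Suc n) = amul (I2 N) (MU N q u a) (FX N q 1 0 n) Rx"
    unfolding FX_Suc Suc.IH[OF nN(1)] ..
  also have "\<dots> = amul (I2 N) (MU N q 1 0) (FX N q 1 0 n) Rx"
  proof (rule amul_cong)
    fix s r assume sr: "s \<in> I2 N" "r \<in> I2 N" "FX N q 1 0 n s \<noteq> 0" "Rx r \<noteq> (0::'a)"
    obtain s1 s2 s3 s4 where s: "s = ((s1,s2),(s3,s4))" by (metis prod.exhaust)
    have sp: "s1 = 0 \<and> s2 \<le> n" using Rx_supp[OF N0 nN(1)] sr(3) s by blast
    have r: "r = ((0,0),(0,1)) \<or> r = ((0,1),(1,0))" using Rx_nz sr(4) by blast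
    show "MU N q u a s r = MU N q 1 0 s r"
    proof (rule ext)
      fix t :: "(nat \<times> nat) \<times> (nat \<times> nat)"
      obtain b1 b2 h1 h2 where t: "t = ((b1,b2),(h1,h2))" by (metis prod.exhaust)
      show "MU N q u a s r t = MU N q 1 0 s r t"
        using r sp nN unfolding s t by (auto simp: MU_eval gmu_def)
    qed
  qed
  also have "\<dots> = FX N q 1 0 (Suc n)" unfolding FX_Suc ..
  finally show ?case .
qed

lemma B_rho_unfold:
  "B_rho N q u a (m,n) = amul (I2 N) (MU N q u a) (apow (I2 N) (MU N q u a) (one_idx, one_idx) Rg m) (FX N q u a n)"
  unfolding B_rho_def Let_def B_mu_def taft_mu_def MU_def I2_def Rg_def FX_def Rx_def by simp

lemma taft_Delta_B_rho: "taft_Delta N q (m,n) = B_rho N q 1 0 (m,n)"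
  unfolding B_rho_def taft_Delta_def Let_def B_mu_def taft_mu_def by simp

lemma B_rho_eq:
  assumes "(m,n) \<in> BI N"
  shows "B_rho N q u a (m,n) = B_rho N q 1 0 (m,n)"
proof -
  have mn: "m < N" "n < N" "0 < N" using assms unfolding BI_def by auto
  have "B_rho N q u a (m,n) = amul (I2 N) (MU N q u a) (mvec 1 ((m,0),(m,0))) (FX N q 1 0 n)"
    unfolding B_rho_unfold R1[OF mn(1)] FX_eq[where N=N and q=q and u=u and a=a, OF mn(3) mn(2)] ..
  also have "\<dots> = amul (I2 N) (MU N q 1 0) (mvec 1 ((m,0),(m,0))) (FX N q 1 0 n)"
  proof (rule amul_cong)
    fix s r assume sr: "s \<in> I2 N" "r \<in> I2 N" "mvec (1::'a) ((m,0),(m,0)) s \<noteq> 0" "FX N q 1 0 n r \<noteq> 0"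
    have s: "s = ((m,0),(m,0))" using sr(3) by (simp add: mvec_def split: if_splits)
    obtain r1 r2 r3 r4 where r: "r = ((r1,r2),(r3,r4))" by (metis prod.exhaust)
    have rp: "r1 = 0 \<and> r2 \<le> n" using Rx_supp[OF mn(3) mn(2)] sr(4) r by blast
    show "MU N q u a s r = MU N q 1 0 s r"
    proof (rule ext)
      fix t :: "(nat \<times> nat) \<times> (nat \<times> nat)"
      obtain b1 b2 h1 h2 where t: "t = ((b1,b2),(h1,h2))" by (metis prod.exhaust)
      show "MU N q u a s r t = MU N q 1 0 s r t"
        using rp mn unfolding s r t by (auto simp: MU_eval gmu_def)
    qed
  qed
  also have "\<dots> = B_rho N q 1 0 (m,n)"
    unfolding B_rho_unfold R1[OF mn(1)] ..
  finally show ?thesis .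
qed

lemma B_rho_slice:
  assumes "(m,n) \<in> BI N" "m' < N" "j < N" "l < N"
  shows "B_rho N q u a (m,n) ((m',0),(j,l)) = (if m' = m \<and> j = m \<and> l = n then 1 else 0)"
proof -
  have mn: "m < N" "n < N" "0 < N" using assms unfolding BI_def by auto
  define t where "t = ((m',0::nat),(j,l))"
  define s0 where "s0 = ((m,0::nat),(m,0::nat))"
  define r0 where "r0 = ((0::nat,0::nat),(0::nat,n))"
  have s0I: "s0 \<in> I2 N" "r0 \<in> I2 N" using mn unfolding s0_def r0_def I2_def BI_def by auto
  have "B_rho N q u a (m,n) t = (\<Sum>r\<in>I2 N. 1 * FX N q u a n r * MU N q u a s0 r t)"
    unfolding B_rho_unfold R1[OF mn(1)] s0_def[symmetric] amul_mono_left[OF finite_I2 s0I(1)] ..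
  also have "\<dots> = 1 * FX N q u a n r0 * MU N q u a s0 r0 t"
  proof (rule sum_single[OF finite_I2 s0I(2)])
    fix r assume rI: "r \<in> I2 N" and rr0: "r \<noteq> r0"
    obtain r1 r2 r3 r4 where r: "r = ((r1,r2),(r3,r4))" by (metis prod.exhaust)
    show "1 * FX N q u a n r * MU N q u a s0 r t = 0"
    proof (rule ccontr)
      assume "1 * FX N q u a n r * MU N q u a s0 r t \<noteq> 0"
      hence h1: "FX N q u a n r \<noteq> 0" "MU N q u a s0 r t \<noteq> 0" by auto
      have rp: "r1 = 0 \<and> r2 \<le> n \<and> r3 < N \<and> r4 < N" using Rx_supp[OF mn(3) mn(2)] h1(1) r by blast
      have "0 = (0 + r2) mod N" using MU_nz[of N q u a m 0 m 0 r1 r2 r3 r4 m' 0 j l] h1(2) r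
        unfolding s0_def t_def by simp
      hence r2: "r2 = 0" using rp mn by simp
      have "FX N q u a n ((0,0),(r3,r4)) = (if r3 = 0 \<and> r4 = n then 1 else 0)"
        using Rx_slice[OF mn(3) mn(2), of r3 r4 q u a] rp by blast
      hence "FX N q u a n r = (if r3 = 0 \<and> r4 = n then 1 else 0)"
        using r rp r2 by simp
      hence "r3 = 0 \<and> r4 = n" using h1(1) by (simp split: if_splits)
      thus False using rr0 r rp r2 unfolding r0_def by simp
    qed
  qed
  also have "FX N q u a n r0 = 1" using Rx_slice[OF mn(3) mn(2), of 0 n q u a] mn unfolding r0_def by simp
  also have "MU N q u a s0 r0 t = (if m' = m \<and> j = m \<and> l = n then 1 else 0)"
    unfolding s0_def r0_def t_def MU_eval using mn assms by (auto simp: gmu_def)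
  finally show ?thesis unfolding t_def by simp
qed

lemma B_rho_supp:
  assumes "0 < N" "t \<notin> I2 N"
  shows "B_rho N q u a (m,n) t = 0"
proof (rule ccontr)
  assume "B_rho N q u a (m,n) t \<noteq> 0"
  then obtain s r where "s \<in> I2 N" "r \<in> I2 N" "MU N q u a s r t \<noteq> 0"
    unfolding B_rho_unfold by (blast dest: amul_nz)
  moreover obtain s1 s2 s3 s4 where s: "s = ((s1,s2),(s3,s4))" by (metis prod.exhaust)
  moreover obtain r1 r2 r3 r4 where r: "r = ((r1,r2),(r3,r4))" by (metis prod.exhaust)
  moreover obtain b1 b2 h1 h2 where t: "t = ((b1,b2),(h1,h2))" by (metis prod.exhaust)
  ultimately have "b1 = (s1+r1) mod N \<and> b2 = (s2+r2) mod N \<and> h1 = (s3+r3) mod N \<and> h2 = (s4+r4) mod N"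
    using MU_nz by blast
  hence "t \<in> I2 N" using assms(1) t unfolding I2_def BI_def by auto
  thus False using assms(2) by simp
qed


lemma MU_unit_left:
  assumes N0: "0 < N" and supp: "\<And>t. w t \<noteq> 0 \<Longrightarrow> t \<in> I2 N"
  shows "amul (I2 N) (MU N q u a) (mvec 1 ((0,0),(0,0))) w = w"
proof
  fix k
  have e2: "((0::nat,0::nat),(0::nat,0::nat)) \<in> I2 N" using N0 unfolding I2_def BI_def by auto
  have MUe: "MU N q u a ((0,0),(0,0)) r k = (if k = r then 1 else 0)" if "r \<in> I2 N" for r
  proof -
    obtain r1 r2 r3 r4 where r: "r = ((r1,r2),(r3,r4))" by (metis prod.exhaust)
    obtain b1 b2 h1 h2 where t: "k = ((b1,b2),(h1,h2))" by (metis prod.exhaust)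
    show ?thesis using that unfolding r t MU_eval I2_def BI_def by (auto simp: gmu_def)
  qed
  have "amul (I2 N) (MU N q u a) (mvec 1 ((0,0),(0,0))) w k = (\<Sum>r\<in>I2 N. 1 * w r * MU N q u a ((0,0),(0,0)) r k)"
    unfolding amul_mono_left[OF finite_I2 e2] ..
  also have "\<dots> = (\<Sum>r\<in>I2 N. if r = k then w k else 0)"
    by (rule sum.cong) (auto simp: MUe)
  also have "\<dots> = w k" using supp[of k] finite_I2 by (auto simp: sum.delta')
  finally show "amul (I2 N) (MU N q u a) (mvec 1 ((0,0),(0,0))) w k = w k" .
qed

lemma Delta_00:
  assumes "0 < N"
  shows "taft_Delta N q (0,0) = mvec 1 ((0,0),(0,0))"
proof -
  have "taft_Delta N q (0,0) = amul (I2 N) (MU N q 1 0) (mvec 1 ((0,0),(0,0))) (mvec 1 ((0,0),(0,0)))"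
    unfolding taft_Delta_B_rho B_rho_unfold FX_0 using R1[OF assms, of q 1 0] by simp
  also have "\<dots> = mvec 1 ((0,0),(0,0))"
    by (rule MU_unit_left) (use assms in \<open>auto simp: mvec_def I2_def BI_def split: if_splits\<close>)
  finally show ?thesis .
qed

lemma Delta_10:
  assumes "1 < N"
  shows "taft_Delta N q (1,0) = mvec 1 ((1,0),(1,0))"
proof -
  have N0: "0 < N" using assms by simp
  have "taft_Delta N q (1,0) = amul (I2 N) (MU N q 1 0) (mvec 1 ((1,0),(1,0))) (mvec 1 ((0,0),(0,0)))"
    unfolding taft_Delta_B_rho B_rho_unfold FX_0 using R1[OF assms, of q 1 0] by simp
  also have "\<dots> = (\<lambda>t. 1 * 1 * MU N q 1 0 ((1,0),(1,0)) ((0,0),(0,0)) t)"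
    by (rule amul_mono_mono) (use finite_I2 assms in \<open>auto simp: I2_def BI_def\<close>)
  also have "\<dots> = mvec 1 ((1,0),(1,0))"
  proof (rule ext)
    fix t :: "(nat \<times> nat) \<times> (nat \<times> nat)"
    obtain b1 b2 h1 h2 where t: "t = ((b1,b2),(h1,h2))" by (metis prod.exhaust)
    show "1 * 1 * MU N q 1 0 ((1,0),(1,0)) ((0,0),(0,0)) t = mvec 1 ((1,0),(1,0)) t"
      unfolding t MU_eval using assms by (auto simp: gmu_def mvec_def)
  qed
  finally show ?thesis .
qed

lemma Rx_supp_I2: "1 < N \<Longrightarrow> Rx t \<noteq> (0::'a::comm_ring_1) \<Longrightarrow> t \<in> I2 N"
proof -
  assume a: "1 < N" "Rx t \<noteq> (0::'a)"
  have "t = ((0,0),(0,1)) \<or> t = ((0,1),(1,0))" by (rule Rx_nz[OF a(2)])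
  thus ?thesis using a(1) unfolding I2_def BI_def by auto
qed

lemma Delta_01:
  assumes "1 < N"
  shows "taft_Delta N q (0,1) = (\<lambda>t. mvec 1 ((0,0),(0,1)) t + mvec 1 ((0,1),(1,0)) t)"
proof -
  have N0: "0 < N" using assms by simp
  have "FX N q 1 0 1 = Rx"
    unfolding One_nat_def FX_Suc FX_0 by (rule MU_unit_left[OF N0]) (use Rx_supp_I2 assms in blast)
  hence "taft_Delta N q (0,1) = amul (I2 N) (MU N q 1 0) (mvec 1 ((0,0),(0,0))) Rx"
    unfolding taft_Delta_B_rho B_rho_unfold using R1[OF N0, of q 1 0] by simp
  also have "\<dots> = Rx"
    by (rule MU_unit_left[OF N0]) (use Rx_supp_I2 assms in blast)
  finally show ?thesis unfolding Rx_mono .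
qed

lemma lin_ext_mono:
  assumes "finite I" "p \<in> I"
  shows "lin_ext I f (mvec c p) = (\<lambda>k. c * f p k)"
proof
  fix k
  have "lin_ext I f (mvec c p) k = (\<Sum>i\<in>I. if i = p then c * f p k else 0)"
    unfolding lin_ext_def mvec_def by (rule sum.cong) auto
  thus "lin_ext I f (mvec c p) k = c * f p k" using assms by simp
qed

lemma lin_ext_add:
  "lin_ext I f (\<lambda>x. v1 x + v2 x) = (\<lambda>k. lin_ext I f v1 k + lin_ext I f v2 k)"
  unfolding lin_ext_def by (simp add: ring_distribs sum.distrib)

lemma lin_ext_slice:
  assumes "x < N" "y < N"
  shows "lin_ext (BI N) (B_rho N q u a) v ((x,0),(x,y)) = v (x,y)"
proof -
  have xy: "(x,y) \<in> BI N" using assms unfolding BI_def by simp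
  have "lin_ext (BI N) (B_rho N q u a) v ((x,0),(x,y)) = (\<Sum>s\<in>BI N. v s * B_rho N q u a s ((x,0),(x,y)))"
    unfolding lin_ext_def ..
  also have "\<dots> = v (x,y) * B_rho N q u a (x,y) ((x,0),(x,y))"
  proof (rule sum_single[OF finite_BI xy])
    fix s assume sI: "s \<in> BI N" "s \<noteq> (x,y)"
    obtain m n where s: "s = (m,n)" by (metis prod.exhaust)
    show "v s * B_rho N q u a s ((x,0),(x,y)) = 0"
      using B_rho_slice[of m n N x x y q u a] sI assms unfolding s by auto
  qed
  also have "B_rho N q u a (x,y) ((x,0),(x,y)) = 1"
    using B_rho_slice[of x y N x x y q u a] xy assms by simp
  finally show ?thesis by simp
qed




lemma comod_char:
  fixes \<phi> :: "nat \<times> nat \<Rightarrow> nat \<times> nat \<Rightarrow> 'a::comm_ring_1"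
  assumes N2: "2 \<le> N" and cm: "B_comodule_map N q u a \<phi>"
  shows "\<phi> (0,0) = mvec (\<phi> (0,0) (0,0)) (0,0)"
    and "\<phi> (1,0) = mvec (\<phi> (1,0) (1,0)) (1,0)"
    and "\<phi> (0,1) = (\<lambda>t. mvec (\<phi> (0,0) (0,0)) (0,1) t + mvec (\<phi> (0,1) (1,0)) (1,0) t)"
proof -
  have N1: "1 < N" "0 < N" using N2 by auto
  have BI: "(0,0) \<in> BI N" "(1,0) \<in> BI N" "(0,1) \<in> BI N" using N1 unfolding BI_def by auto
  have supp: "\<phi> i (x,y) = 0" if "i \<in> BI N" "\<not> (x < N \<and> y < N)" for i x y
    using cm that unfolding B_comodule_map_def supp_in_def BI_def by auto
  have eq: "lin_ext (BI N) (B_rho N q u a) (\<phi> i) = lin_ext (BI N \<times> BI N) (\<lambda>(j, l). tens (\<phi> j) (bvec l)) (taft_Delta N q i)"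
    if "i \<in> BI N" for i
    using cm that unfolding B_comodule_map_def by blast
  define F where "F = (\<lambda>(j::nat\<times>nat, l::nat\<times>nat). tens (\<phi> j) (bvec l))"
  have Fv: "F (j,l) ((x,0),(x,y)) = \<phi> j (x,0) * bvec l (x,y)" for j l x y by (simp add: F_def tens_def)
  have I2e: "BI N \<times> BI N = I2 N" by (simp add: I2_def)
  have key: "\<phi> i (x,y) = lin_ext (I2 N) F (taft_Delta N q i) ((x,0),(x,y))" if "i \<in> BI N" "x < N" "y < N" for i x y
  proof -
    have "lin_ext (BI N) (B_rho N q u a) (\<phi> i) ((x,0),(x,y)) = \<phi> i (x,y)" by (rule lin_ext_slice[OF that(2,3)])
    thus ?thesis using fun_cong[OF eq[OF that(1)], of "((x,0),(x,y))"] unfolding F_def I2e by simp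
  qed
  have p1: "((0::nat,0::nat),(0::nat,0::nat)) \<in> I2 N" "((1::nat,0::nat),(1::nat,0::nat)) \<in> I2 N"
    "((0::nat,0::nat),(0::nat,1::nat)) \<in> I2 N" "((0::nat,1::nat),(1::nat,0::nat)) \<in> I2 N"
    using N1 unfolding I2_def BI_def by auto
  have E00: "\<phi> (0,0) (x,y) = \<phi> (0,0) (x,0) * bvec (0,0) (x,y)" if "x < N" "y < N" for x y
    using key[OF BI(1) that] unfolding Delta_00[OF N1(2)] lin_ext_mono[OF finite_I2 p1(1)] Fv by simp
  have E10: "\<phi> (1,0) (x,y) = \<phi> (1,0) (x,0) * bvec (1,0) (x,y)" if "x < N" "y < N" for x y
    using key[OF BI(2) that] unfolding Delta_10[OF N1(1)] lin_ext_mono[OF finite_I2 p1(2)] Fv by simp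
  have E01: "\<phi> (0,1) (x,y) = \<phi> (0,0) (x,0) * bvec (0,1) (x,y) + \<phi> (0,1) (x,0) * bvec (1,0) (x,y)"
    if "x < N" "y < N" for x y
    using key[OF BI(3) that] unfolding Delta_01[OF N1(1)] lin_ext_add lin_ext_mono[OF finite_I2 p1(3)]
      lin_ext_mono[OF finite_I2 p1(4)] Fv by simp
  show "\<phi> (0,0) = mvec (\<phi> (0,0) (0,0)) (0,0)"
  proof (rule ext)
    fix p :: "nat \<times> nat"
    obtain x y where p: "p = (x,y)" by (metis prod.exhaust)
    show "\<phi> (0,0) p = mvec (\<phi> (0,0) (0,0)) (0,0) p"
    proof (cases "x < N \<and> y < N")
      case True thus ?thesis using E00[of x y] unfolding p by (auto simp: bvec_def mvec_def)
    next
      case False thus ?thesis using supp[OF BI(1) False] N1 unfolding p by (auto simp: mvec_def)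
    qed
  qed
  show "\<phi> (1,0) = mvec (\<phi> (1,0) (1,0)) (1,0)"
  proof (rule ext)
    fix p :: "nat \<times> nat"
    obtain x y where p: "p = (x,y)" by (metis prod.exhaust)
    show "\<phi> (1,0) p = mvec (\<phi> (1,0) (1,0)) (1,0) p"
    proof (cases "x < N \<and> y < N")
      case True thus ?thesis using E10[of x y] unfolding p by (auto simp: bvec_def mvec_def)
    next
      case False thus ?thesis using supp[OF BI(2) False] N1 unfolding p by (auto simp: mvec_def)
    qed
  qed
  show "\<phi> (0,1) = (\<lambda>t. mvec (\<phi> (0,0) (0,0)) (0,1) t + mvec (\<phi> (0,1) (1,0)) (1,0) t)"
  proof (rule ext)
    fix p :: "nat \<times> nat"
    obtain x y where p: "p = (x,y)" by (metis prod.exhaust)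
    show "\<phi> (0,1) p = mvec (\<phi> (0,0) (0,0)) (0,1) p + mvec (\<phi> (0,1) (1,0)) (1,0) p"
    proof (cases "x < N \<and> y < N")
      case True thus ?thesis using E01[of x y] unfolding p by (auto simp: bvec_def mvec_def)
    next
      case False thus ?thesis using supp[OF BI(3) False] N1 unfolding p by (auto simp: mvec_def)
    qed
  qed
qed

lemma bvec_comod:
  assumes N2: "2 \<le> N"
  shows "B_comodule_map N q u a (\<lambda>h. bvec h)"
  unfolding B_comodule_map_def
proof (intro conjI ballI)
  fix i :: "nat \<times> nat" assume iB: "i \<in> BI N"
  show "supp_in (BI N) (bvec i)" using iB unfolding supp_in_def bvec_def by auto
  obtain m n where i: "i = (m,n)" by (metis prod.exhaust)
  have N0: "0 < N" using N2 by simp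
  show "lin_ext (BI N) (B_rho N q u a) (bvec i) = lin_ext (BI N \<times> BI N) (\<lambda>(j, l). tens (bvec j) (bvec l)) (taft_Delta N q i)"
  proof (rule ext)
    fix k :: "(nat \<times> nat) \<times> (nat \<times> nat)"
    have "lin_ext (BI N) (B_rho N q u a) (bvec i) k = B_rho N q u a i k"
      unfolding bvec_mono lin_ext_mono[OF finite_BI iB] by simp
    also have "\<dots> = (if k \<in> I2 N then taft_Delta N q i k else 0)"
      using B_rho_supp[OF N0, of k q u a m n] B_rho_eq[of m n N q u a] iB unfolding i taft_Delta_B_rho by auto
    also have "\<dots> = (\<Sum>p\<in>I2 N. if p = k then taft_Delta N q i p else 0)"
      using finite_I2 by (simp add: sum.delta')
    also have "\<dots> = lin_ext (BI N \<times> BI N) (\<lambda>(j, l). tens (bvec j) (bvec l)) (taft_Delta N q i) k"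
      unfolding lin_ext_def I2_def[symmetric]
    proof (rule sum.cong)
      fix p :: "(nat \<times> nat) \<times> (nat \<times> nat)"
      obtain j l where p: "p = (j,l)" by (metis prod.exhaust)
      show "(if p = k then taft_Delta N q i p else 0) = taft_Delta N q i p * (case p of (j, l) \<Rightarrow> tens (bvec j) (bvec l)) k"
        unfolding p by (simp add: tens_bvec mvec_def)
    qed simp
    finally show "lin_ext (BI N) (B_rho N q u a) (bvec i) k = lin_ext (BI N \<times> BI N) (\<lambda>(j, l). tens (bvec j) (bvec l)) (taft_Delta N q i) k" .
  qed
qed

lemma unit_mult': "x dvd 1 \<Longrightarrow> y dvd (1::'a::comm_ring_1) \<Longrightarrow> x * y dvd 1"
  using mult_dvd_mono[of x 1 y 1] by simp

lemma unit_pow': "x dvd (1::'a::comm_ring_1) \<Longrightarrow> x ^ n dvd 1"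
  by (induction n) (simp_all add: unit_mult')

lemma prod_unit: "(\<And>i. i \<in> A \<Longrightarrow> f i dvd (1::'a::comm_ring_1)) \<Longrightarrow> prod f A dvd 1"
  by (induction A rule: infinite_finite_induct) (auto intro: unit_mult')

theorem proposition3p2:
  fixes N :: nat and q u u' a a' :: "'a::comm_ring_1"
  assumes "N \<ge> 2"
    and "is_cyclotomic_root N q"
    and "u dvd 1" and "u' dvd 1"
    and "(1 - q) dvd 1"
    and "Id_B N q u a = Id_B N q u' a'"
  shows "a' = a"
proof -
  have N2: "2 \<le> N" using assms(1) by simp
  have N0: "0 < N" using N2 by simp
  have qN: "q ^ N = 1" using cyc_root_pow[OF N0 assms(2)] .
  obtain n0 where n0: "N = Suc n0" using N0 by (cases N) auto
  have "q * q ^ (N - 1) = 1" using qN unfolding n0 by simp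
  hence qu: "q dvd 1" by (metis dvd_triv_left)
  have KKu: "KK N q dvd 1"
  proof -
    have f1: "q ^ i - q ^ Suc i dvd 1" for i
    proof -
      have "q ^ i - q ^ Suc i = q ^ i * (1 - q)" by (simp add: algebra_simps)
      thus ?thesis using qu assms(5) by (simp add: unit_mult' unit_pow')
    qed
    have f2: "q ^ (N-1) - 1 dvd 1"
    proof -
      have "q ^ (N-1) - 1 = q ^ (N-1) * (1 - q)"
        using qN unfolding n0 by (simp add: algebra_simps)
      thus ?thesis using qu assms(5) by (simp add: unit_mult' unit_pow')
    qed
    have "(\<Prod>i<N-1. q^i - q^(Suc i)) dvd 1" by (rule prod_unit) (rule f1)
    thus ?thesis unfolding KK_def using f2 by (rule unit_mult')
  qed
  have P_in: "PP N q a \<in> Id_B N q u a"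
    unfolding Id_B_def
  proof (intro CollectI conjI allI impI)
    show "T_elem N (PP N q a)" by (rule T_elem_PP[OF N2])
    fix phi :: "nat \<Rightarrow> nat \<times> nat \<Rightarrow> nat \<times> nat \<Rightarrow> 'a"
    assume "\<forall>i. B_comodule_map N q u a (phi i)"
    hence cm: "B_comodule_map N q u a (phi 0)" by blast
    have "B_eval N q u a phi (PP N q a) = mvec (KK N q * (phi 0 (0,0) (0,0) * phi 0 (1,0) (1,0))^N * u * (a - a)) (0,0)"
      by (rule eval_PP[where phi=phi and N=N and q=q and u=u and bb=a and a=a and c="phi 0 (0,0) (0,0)" and e="phi 0 (1,0) (1,0)" and d="phi 0 (0,1) (1,0)", OF N2 comod_char[OF N2 cm]])
    thus "B_eval N q u a phi (PP N q a) = (\<lambda>_. 0)" by (simp add: mvec_def fun_eq_iff)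
  qed
  hence "PP N q a \<in> Id_B N q u' a'" using assms(6) by simp
  hence H: "\<forall>phi. (\<forall>i. B_comodule_map N q u' a' (phi i)) \<longrightarrow> B_eval N q u' a' phi (PP N q a) = (\<lambda>_. 0)"
    unfolding Id_B_def by simp
  have ev: "B_eval N q u' a' (\<lambda>i h. bvec h) (PP N q a) = (\<lambda>_. 0)"
    using H[rule_format, of "\<lambda>i h. bvec h"] bvec_comod[OF N2, of q u' a'] by simp
  have U: "(\<lambda>i h. bvec h) 0 (0,0) = mvec (1::'a) (0,0)" by (simp add: bvec_mono)
  have G: "(\<lambda>i h. bvec h) 0 (1,0) = mvec (1::'a) (1,0)" by (simp add: bvec_mono)
  have X: "(\<lambda>i h. bvec h) 0 (0,1) = (\<lambda>t. mvec (1::'a) (0,1) t + mvec 0 (1,0) t)"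
    by (rule ext) (simp add: bvec_def mvec_def)
  have "B_eval N q u' a' (\<lambda>i h. bvec h) (PP N q a) = mvec (KK N q * (1 * 1)^N * u' * (a' - a)) (0,0)"
    using eval_PP[where phi="\<lambda>i h. bvec h" and N=N and q=q and u=u' and bb=a' and a=a and c=1 and e=1 and d=0, OF N2 U G X] by simp
  hence "KK N q * u' * (a' - a) = 0" using fun_cong[OF ev, of "(0,0)"] by (simp add: mvec_def)
  moreover have "KK N q * u' dvd 1" using KKu assms(4) by (simp add: unit_mult')
  moreover obtain k where k: "1 = (KK N q * u') * k" using calculation(2) by (rule dvdE)
  ultimately have "a' - a = 0"
  proof -
    have "a' - a = ((KK N q * u') * k) * (a' - a)" using k by simp
    also have "\<dots> = k * (KK N q * u' * (a' - a))" by (simp add: algebra_simps)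
    also have "\<dots> = 0" using \<open>KK N q * u' * (a' - a) = 0\<close> by simp
    finally show ?thesis .
  qed
  thus ?thesis by simp
qed


end
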